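(* Let $\mathcal{D}_\varphi\in\Delta(\Sigma^V)$ be an identity-independent signaling scheme with finite signal space $\Sigma\subset[0,1]$. Then it is persuasive if and only if (i) $\Delta_\theta=0$ for every $\theta\in\Sigma$ with $\theta>0$, and (ii) if $0\in\Sigma$, then $\Delta_0\ge0$.
   Context: Setting. $V$ is a finite set of $n$ task types and $W=(W_{u,v})_{u,v\in V}$ is a symmetric matrix with entries in $[0,1]$ and $W_{v,v}=1$; $N(v)=\{v'\ne v: W_{v,v'}>0\}$. There are $n$ agents; the type profile $t=(t_1,\dots,t_n)$ is a uniformly random bijection $[n]\to V$. An identity-independent signaling scheme is given by a distribution $\mathcal{D}_\varphi$ on $\Sigma^V$: $s=(s_v)_{v\in V}\sim\mathcal{D}_\varphi$ is drawn independently of $t$ and agent $i$ privately receives $s_{t_i}$. For agent $i$, a signal $\theta\in\Sigma$ with $\Pr[s_{t_i}=\theta]>0$ and $x\ge0$, let $Q_i(x\mid\theta)=\mathbb{E}\big[x+\sum_{v'\neq t_i}W_{t_i,v'}s_{v'}\,\big|\,s_{t_i}=\theta\big]$ (over the joint law of $t,s$). The scheme is persuasive if for every agent $i$ and every such $\theta$: $Q_i(\theta\mid\theta)\ge1$ and $\theta=\min\{x\ge0:Q_i(x\mid\theta)\ge1\}$. Slack: for $\theta\in\Sigma$, $\mathrm{Contrib}_\theta=\mathbb{E}_{s\sim\mathcal{D}_\varphi}\big[\sum_{v\in V}\mathbf 1\{s_v=\theta\}\sum_{v'\in N(v)}W_{v,v'}s_{v'}\big]$, $\mathrm{Num}_\theta=\mathbb{E}_{s\sim\mathcal{D}_\varphi}\big[\sum_{v\in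 V}\mathbf 1\{s_v=\theta\}\big]$, and $\Delta_\theta=\mathrm{Contrib}_\theta-(1-\theta)\mathrm{Num}_\theta$. *)

theory Defs
  imports "HOL-Probability.Probability"
begin

text \<open>Task types: a finite type 'v (the set V). Agents: a finite type 'i with
  CARD('i) = CARD('v) (the n agents).\<close>

definition joint :: "('v::finite \<Rightarrow> real) pmf \<Rightarrow> (('i::finite \<Rightarrow> 'v) \<times> ('v \<Rightarrow> real)) pmf" where
  "joint D = pair_pmf (pmf_of_set {t. bij t}) D"

definition Qval :: "('v::finite \<Rightarrow> real) pmf \<Rightarrow> ('v \<Rightarrow> 'v \<Rightarrow> real) \<Rightarrow> 'i::finite \<Rightarrow> real \<Rightarrow> real \<Rightarrow> real" where
  "Qval D W i \<theta> x = measure_pmf.expectation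
      (cond_pmf (joint D :: (('i \<Rightarrow> 'v) \<times> ('v \<Rightarrow> real)) pmf) {(t, s). s (t i) = \<theta>})
      (\<lambda>(t, s). x + (\<Sum>v'\<in>UNIV - {t i}. W (t i) v' * s v'))"

definition persuasive :: "('v::finite \<Rightarrow> real) pmf \<Rightarrow> ('v \<Rightarrow> 'v \<Rightarrow> real) \<Rightarrow> 'i::finite itself \<Rightarrow> bool" where
  "persuasive D W (_ :: 'i itself) \<longleftrightarrow>
     (\<forall>(i::'i) \<theta>. measure_pmf.prob (joint D :: (('i \<Rightarrow> 'v) \<times> ('v \<Rightarrow> real)) pmf) {(t, s). s (t i) = \<theta>} > 0 \<longrightarrow>
        Qval D W i \<theta> \<theta> \<ge> 1 \<and> \<theta> = (LEAST x. 0 \<le> x \<and> 1 \<le> Qval D W i \<theta> x))"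

definition Nbr :: "('v \<Rightarrow> 'v \<Rightarrow> real) \<Rightarrow> 'v \<Rightarrow> 'v set" where
  "Nbr W v = {v'. v' \<noteq> v \<and> W v v' > 0}"

definition Contrib :: "('v::finite \<Rightarrow> real) pmf \<Rightarrow> ('v \<Rightarrow> 'v \<Rightarrow> real) \<Rightarrow> real \<Rightarrow> real" where
  "Contrib D W \<theta> = measure_pmf.expectation D
     (\<lambda>s. \<Sum>v\<in>UNIV. (if s v = \<theta> then 1 else 0) * (\<Sum>v'\<in>Nbr W v. W v v' * s v'))"

definition Num :: "('v::finite \<Rightarrow> real) pmf \<Rightarrow> real \<Rightarrow> real" where
  "Num D \<theta> = measure_pmf.expectation D (\<lambda>s. \<Sum>v\<in>UNIV. if s v = \<theta> then 1 else 0)"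

definition Slack :: "('v::finite \<Rightarrow> real) pmf \<Rightarrow> ('v \<Rightarrow> 'v \<Rightarrow> real) \<Rightarrow> real \<Rightarrow> real" where
  "Slack D W \<theta> = Contrib D W \<theta> - (1 - \<theta>) * Num D \<theta>"

end

theory Submission
  imports Defs
begin

lemma bij_exists:
  assumes "CARD('i::finite) = CARD('v::finite)"
  shows "\<exists>t::'i\<Rightarrow>'v. bij t"
  using finite_same_card_bij[of "UNIV::'i set" "UNIV::'v set"] assms by auto

lemma card_fiber:
  fixes i :: "'i::finite" and v w :: "'v::finite"
  shows "card {t. bij t \<and> t i = v} = card {t::'i\<Rightarrow>'v. bij t \<and> t i = w}"
proof -
  define \<tau> where "\<tau> = (\<lambda>x. if x = v then w else if x = w then v else x)"
  have inv: "\<tau> (\<tau> x) = x" for x unfolding \<tau>_def by auto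
  have bt: "bij \<tau>" by (metis inv bijI' )
  have bc: "bij (\<tau> \<circ> t)" if "bij t" for t using bt that bij_comp by blast
  have "bij_betw (\<lambda>t. \<tau> \<circ> t) {t. bij t \<and> t i = v} {t::'i\<Rightarrow>'v. bij t \<and> t i = w}"
    apply (rule bij_betw_byWitness[where f'="\<lambda>t. \<tau> \<circ> t"])
    using inv bc by (auto simp: fun_eq_iff \<tau>_def)
  then show ?thesis by (rule bij_betw_same_card)
qed

lemma sum_uniform:
  fixes i :: "'i::finite" and h :: "'v::finite \<Rightarrow> real"
  assumes "CARD('i) = CARD('v)"
  shows "(\<Sum>t\<in>{t::'i\<Rightarrow>'v. bij t}. h (t i)) = real (card {t::'i\<Rightarrow>'v. bij t}) / CARD('v) * (\<Sum>v\<in>UNIV. h v)"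
proof -
  define T where "T = {t::'i\<Rightarrow>'v. bij t}"
  obtain v0 :: 'v where True by auto
  define c where "c = card {t\<in>T. t i = v0}"
  have cf: "card {t\<in>T. t i = v} = c" for v
    unfolding c_def T_def using card_fiber[of i v v0] by simp
  have "(\<Sum>t\<in>T. h (t i)) = (\<Sum>v\<in>UNIV. \<Sum>t\<in>{t\<in>T. t i = v}. h (t i))"
    by (rule sum.group[symmetric]) auto
  also have "\<dots> = (\<Sum>v\<in>UNIV. h v * c)"
  proof (rule sum.cong)
    fix v :: 'v
    have "(\<Sum>t\<in>{t\<in>T. t i = v}. h (t i)) = (\<Sum>t\<in>{t\<in>T. t i = v}. h v)" by (rule sum.cong) auto
    then show "(\<Sum>t\<in>{t\<in>T. t i = v}. h (t i)) = h v * c" using cf[of v] by simp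
  qed simp
  finally have 1: "(\<Sum>t\<in>T. h (t i)) = c * (\<Sum>v\<in>UNIV. h v)"
    by (simp add: sum_distrib_left mult.commute)
  have "card T = (\<Sum>t\<in>T. 1::nat)" by simp
  also have "\<dots> = (\<Sum>v\<in>UNIV. \<Sum>t\<in>{t\<in>T. t i = v}. 1)"
    by (rule sum.group[symmetric]) auto
  also have "\<dots> = CARD('v) * c" using cf by simp
  finally have "card T = CARD('v) * c" .
  then have "real c = real (card T) / CARD('v)" by simp
  then show ?thesis using 1 T_def by simp
qed

lemma joint_exp:
  fixes D :: "('v::finite \<Rightarrow> real) pmf" and k :: "'v \<Rightarrow> ('v \<Rightarrow> real) \<Rightarrow> real" and i :: "'i::finite"
  assumes fin: "finite (set_pmf D)" and card: "CARD('i) = CARD('v)"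
  shows "measure_pmf.expectation (joint D :: (('i \<Rightarrow> 'v) \<times> ('v \<Rightarrow> real)) pmf) (\<lambda>(t, s). k (t i) s)
       = measure_pmf.expectation D (\<lambda>s. \<Sum>v\<in>UNIV. k v s) / CARD('v)"
proof -
  define T where "T = {t::'i\<Rightarrow>'v. bij t}"
  define S where "S = set_pmf D"
  have fT: "finite T" by simp
  have neT: "T \<noteq> {}" using bij_exists[OF card] T_def by auto
  have cT: "card T > 0" using fT neT by (simp add: card_gt_0_iff)
  have jT: "(joint D :: (('i \<Rightarrow> 'v) \<times> ('v \<Rightarrow> real)) pmf) = pair_pmf (pmf_of_set T) D"
    unfolding joint_def T_def ..
  have po: "pmf (pmf_of_set T) t = 1 / card T" if "t \<in> T" for t
    using pmf_of_set[OF neT fT] that by simp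
  have setj: "set_pmf (joint D :: (('i \<Rightarrow> 'v) \<times> ('v \<Rightarrow> real)) pmf) = T \<times> S"
    unfolding joint_def T_def S_def using fT neT T_def by simp
  have "measure_pmf.expectation (joint D :: (('i \<Rightarrow> 'v) \<times> ('v \<Rightarrow> real)) pmf) (\<lambda>(t, s). k (t i) s)
      = (\<Sum>x\<in>T \<times> S. pmf (joint D :: (('i \<Rightarrow> 'v) \<times> ('v \<Rightarrow> real)) pmf) x *\<^sub>R (case x of (t, s) \<Rightarrow> k (t i) s))"
    by (rule integral_measure_pmf) (use fin S_def setj in auto)
  also have "\<dots> = (\<Sum>(t,s)\<in>T \<times> S. pmf D s / card T * k (t i) s)"
    by (rule sum.cong) (auto simp: jT pmf_pair po)
  also have "\<dots> = (\<Sum>t\<in>T. \<Sum>s\<in>S. pmf D s / card T * k (t i) s)"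
    by (rule sum.cartesian_product[symmetric])
  also have "\<dots> = (\<Sum>s\<in>S. pmf D s / card T * (\<Sum>t\<in>T. k (t i) s))"
    by (subst sum.swap) (simp add: sum_distrib_left)
  also have "\<dots> = (\<Sum>s\<in>S. pmf D s * (\<Sum>v\<in>UNIV. k v s) / CARD('v))"
  proof (rule sum.cong)
    fix s
    show "pmf D s / card T * (\<Sum>t\<in>T. k (t i) s) = pmf D s * (\<Sum>v\<in>UNIV. k v s) / CARD('v)"
      unfolding T_def sum_uniform[OF card, where i=i and h="\<lambda>v. k v s"] using cT bij_exists[OF card] unfolding T_def by (simp add: field_simps)
  qed simp
  also have "\<dots> = measure_pmf.expectation D (\<lambda>s. \<Sum>v\<in>UNIV. k v s) / CARD('v)"
    by (subst integral_measure_pmf[OF fin]) (auto simp: S_def sum_divide_distrib)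
  finally show ?thesis .
qed

lemma cond_exp:
  fixes p :: "'a pmf" and f :: "'a \<Rightarrow> real"
  assumes fin: "finite (set_pmf p)" and pos: "measure_pmf.prob p A > 0"
  shows "measure_pmf.expectation (cond_pmf p A) f
       = measure_pmf.expectation p (\<lambda>x. indicator A x * f x) / measure_pmf.prob p A"
proof -
  have ne: "set_pmf p \<inter> A \<noteq> {}"
    using pos measure_pmf_zero_iff[of p A] by auto
  have "measure_pmf.expectation (cond_pmf p A) f = (\<Sum>x\<in>set_pmf p. pmf (cond_pmf p A) x *\<^sub>R f x)"
    by (rule integral_measure_pmf[OF fin]) (use ne in auto)
  also have "\<dots> = (\<Sum>x\<in>set_pmf p. pmf p x *\<^sub>R (indicator A x * f x)) / measure_pmf.prob p A"
    by (auto simp: pmf_cond[OF ne] sum_divide_distrib indicator_def intro!: sum.cong)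
  also have "\<dots> = measure_pmf.expectation p (\<lambda>x. indicator A x * f x) / measure_pmf.prob p A"
    by (subst integral_measure_pmf[OF fin]) auto
  finally show ?thesis .
qed

lemma prob_eq:
  fixes D :: "('v::finite \<Rightarrow> real) pmf" and i :: "'i::finite"
  assumes fin: "finite (set_pmf D)" and card: "CARD('i) = CARD('v)"
  shows "measure_pmf.prob (joint D :: (('i \<Rightarrow> 'v) \<times> ('v \<Rightarrow> real)) pmf) {(t, s). s (t i) = \<theta>}
     = Num D \<theta> / CARD('v)"
proof -
  have ind: "indicator {(t, s). s (t i) = \<theta>} = (\<lambda>(t::'i\<Rightarrow>'v, s::'v\<Rightarrow>real). (\<lambda>v s. if s v = \<theta> then 1 else 0::real) (t i) s)"
    by (auto simp: fun_eq_iff indicator_def)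
  have "measure_pmf.prob (joint D :: (('i \<Rightarrow> 'v) \<times> ('v \<Rightarrow> real)) pmf) {(t, s). s (t i) = \<theta>}
     = measure_pmf.expectation (joint D :: (('i \<Rightarrow> 'v) \<times> ('v \<Rightarrow> real)) pmf) (indicator {(t, s). s (t i) = \<theta>})"
    by (simp add: integral_indicator)
  also have "\<dots> = Num D \<theta> / CARD('v)"
    unfolding ind Num_def using joint_exp[OF fin card, where k="\<lambda>v s. if s v = \<theta> then 1 else 0" and i=i] by simp
  finally show ?thesis .
qed

lemma G_Nbr:
  fixes W :: "'v::finite \<Rightarrow> 'v \<Rightarrow> real"
  assumes "\<And>u v. 0 \<le> W u v"
  shows "(\<Sum>v'\<in>Nbr W v. W v v' * s v') = (\<Sum>v'\<in>UNIV - {v}. W v v' * (s v' :: real))"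
proof (rule sum.mono_neutral_left)
  show "\<forall>i\<in>UNIV - {v} - Nbr W v. W v i * s i = 0"
    using assms by (auto simp: Nbr_def) (metis order.order_iff_strict)
qed (auto simp: Nbr_def)

lemma Qval_eq:
  fixes D :: "('v::finite \<Rightarrow> real) pmf" and i :: "'i::finite"
  assumes fin: "finite (set_pmf D)" and card: "CARD('i) = CARD('v)"
    and Wnn: "\<And>u v. 0 \<le> W u v"
    and pos: "measure_pmf.prob (joint D :: (('i \<Rightarrow> 'v) \<times> ('v \<Rightarrow> real)) pmf) {(t, s). s (t i) = \<theta>} > 0"
  shows "Qval D W i \<theta> x = x + Contrib D W \<theta> / Num D \<theta>"
proof -
  define k where "k = (\<lambda>v (s::'v\<Rightarrow>real). (if s v = \<theta> then 1 else 0) * (x + (\<Sum>v'\<in>UNIV - {v}. W v v' * s v')))"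
  have finj: "finite (set_pmf (joint D :: (('i \<Rightarrow> 'v) \<times> ('v \<Rightarrow> real)) pmf))"
    using fin by (simp add: joint_def)
  have pe: "measure_pmf.prob (joint D :: (('i \<Rightarrow> 'v) \<times> ('v \<Rightarrow> real)) pmf) {(t, s). s (t i) = \<theta>} = Num D \<theta> / CARD('v)"
    by (rule prob_eq[OF fin card])
  have Npos: "Num D \<theta> > 0" using pos pe by (simp add: zero_less_divide_iff)
  have "Qval D W i \<theta> x = measure_pmf.expectation (joint D :: (('i \<Rightarrow> 'v) \<times> ('v \<Rightarrow> real)) pmf)
        (\<lambda>(t, s). k (t i) s) / (Num D \<theta> / CARD('v))"
    unfolding Qval_def cond_exp[OF finj pos] pe
    by (rule arg_cong2[where f="(/)"], rule Bochner_Integration.integral_cong) (auto simp: k_def indicator_def)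
  also have "\<dots> = measure_pmf.expectation D (\<lambda>s. \<Sum>v\<in>UNIV. k v s) / Num D \<theta>"
    unfolding joint_exp[OF fin card] by simp
  also have "measure_pmf.expectation D (\<lambda>s. \<Sum>v\<in>UNIV. k v s)
      = measure_pmf.expectation D (\<lambda>s. x * (\<Sum>v\<in>UNIV. if s v = \<theta> then 1 else 0)
          + (\<Sum>v\<in>UNIV. (if s v = \<theta> then 1 else 0) * (\<Sum>v'\<in>Nbr W v. W v v' * s v')))"
  proof (rule Bochner_Integration.integral_cong)
    fix s :: "'v \<Rightarrow> real"
    have pw: "k v s = x * (if s v = \<theta> then 1 else 0) + (if s v = \<theta> then 1 else 0) * (\<Sum>v'\<in>Nbr W v. W v v' * s v')" for v
      using G_Nbr[where W=W and v=v and s=s, OF Wnn] by (simp add: k_def algebra_simps)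
    show "(\<Sum>v\<in>UNIV. k v s) = x * (\<Sum>v\<in>UNIV. if s v = \<theta> then 1 else 0)
          + (\<Sum>v\<in>UNIV. (if s v = \<theta> then 1 else 0) * (\<Sum>v'\<in>Nbr W v. W v v' * s v'))"
      unfolding pw sum.distrib sum_distrib_left ..
  qed simp
  also have "\<dots> = x * Num D \<theta> + Contrib D W \<theta>"
    unfolding Num_def Contrib_def
    by (subst Bochner_Integration.integral_add) (auto intro!: integrable_measure_pmf_finite fin)
  finally show ?thesis using Npos by (simp add: field_simps)
qed

lemma least_max: "(LEAST x::real. 0 \<le> x \<and> 1 \<le> x + C) = max 0 (1 - C)"
  by (rule Least_equality) auto

lemma num_zero:
  fixes D :: "('v::finite \<Rightarrow> real) pmf"
  assumes fin: "finite (set_pmf D)"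
  shows "Num D \<theta> = 0 \<longleftrightarrow> (\<forall>s\<in>set_pmf D. \<forall>v. s v \<noteq> \<theta>)"
proof -
  define cnt where "cnt s = (\<Sum>v\<in>UNIV. if s v = \<theta> then 1 else (0::real))" for s :: "'v \<Rightarrow> real"
  have N: "Num D \<theta> = (\<Sum>s\<in>set_pmf D. pmf D s *\<^sub>R cnt s)"
    unfolding Num_def cnt_def by (rule integral_measure_pmf[OF fin]) simp
  have cnn: "cnt s \<ge> 0" for s unfolding cnt_def by (rule sum_nonneg) simp
  have nn: "\<forall>s\<in>set_pmf D. 0 \<le> pmf D s *\<^sub>R cnt s"
    using cnn by simp
  have ge: "cnt s \<ge> 1" if "s v = \<theta>" for s v
  proof -
    have "cnt s \<ge> (if s v = \<theta> then 1 else 0)"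
      unfolding cnt_def by (rule member_le_sum) auto
    then show ?thesis using that by simp
  qed
  show ?thesis
  proof
    assume "Num D \<theta> = 0"
    then have Z: "\<forall>s\<in>set_pmf D. pmf D s *\<^sub>R cnt s = 0"
      using sum_nonneg_eq_0_iff[OF fin nn[rule_format]] N by simp
    show "\<forall>s\<in>set_pmf D. \<forall>v. s v \<noteq> \<theta>"
    proof (intro ballI allI notI)
      fix s v assume s: "s \<in> set_pmf D" and e: "s v = \<theta>"
      have "pmf D s > 0" using s by (simp add: pmf_positive)
      moreover have "cnt s \<ge> 1" using ge[of s v] e by simp
      ultimately have "pmf D s *\<^sub>R cnt s > 0" by simp
      moreover have "pmf D s *\<^sub>R cnt s = 0" using Z s by blast
      ultimately show False by (metis less_irrefl)
    qed
  next
    assume H: "\<forall>s\<in>set_pmf D. \<forall>v. s v \<noteq> \<theta>"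
    have "cnt s = 0" if "s \<in> set_pmf D" for s using H that unfolding cnt_def by simp
    then show "Num D \<theta> = 0" unfolding N by simp
  qed
qed

lemma contrib_zero:
  fixes D :: "('v::finite \<Rightarrow> real) pmf"
  assumes fin: "finite (set_pmf D)" and h: "\<forall>s\<in>set_pmf D. \<forall>v. s v \<noteq> \<theta>"
  shows "Contrib D W \<theta> = 0"
proof -
  have "Contrib D W \<theta> = (\<Sum>s\<in>set_pmf D. pmf D s *\<^sub>R (\<Sum>v\<in>UNIV. (if s v = \<theta> then 1 else 0) * (\<Sum>v'\<in>Nbr W v. W v v' * s v')))"
    unfolding Contrib_def by (rule integral_measure_pmf[OF fin]) simp
  also have "\<dots> = 0" using h by simp
  finally show ?thesis .
qed

lemma aux1: "(N::real) > 0 \<Longrightarrow> (\<theta> = 1 - c / N) \<longleftrightarrow> c - (1 - \<theta>) * N = 0"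
  by (auto simp: field_simps)
lemma aux2: "(N::real) > 0 \<Longrightarrow> (0 \<ge> 1 - c / N) \<longleftrightarrow> c - (1 - 0) * N \<ge> 0"
  by (auto simp: field_simps)
lemma aux3: "(\<theta>::real) \<ge> 0 \<Longrightarrow> (\<theta> = max 0 x) \<longleftrightarrow> ((\<theta> > 0 \<longrightarrow> \<theta> = x) \<and> (\<theta> = 0 \<longrightarrow> x \<le> 0))"
  by (auto simp: max_def)


theorem lemma3p2:
  fixes D :: "('v::finite \<Rightarrow> real) pmf"
    and W :: "'v \<Rightarrow> 'v \<Rightarrow> real"
    and \<Sigma> :: "real set"
  assumes agents: "CARD('i::finite) = CARD('v)"
    and W_sym: "\<And>u v. W u v = W v u"
    and W_range: "\<And>u v. 0 \<le> W u v \<and> W u v \<le> 1"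
    and W_diag: "\<And>v. W v v = 1"
    and Sigma_fin: "finite \<Sigma>"
    and Sigma_sub: "\<Sigma> \<subseteq> {0..1}"
    and D_supp: "\<And>s v. s \<in> set_pmf D \<Longrightarrow> s v \<in> \<Sigma>"
  shows "persuasive D W TYPE('i) \<longleftrightarrow>
           ((\<forall>\<theta>\<in>\<Sigma>. \<theta> > 0 \<longrightarrow> Slack D W \<theta> = 0) \<and> (0 \<in> \<Sigma> \<longrightarrow> Slack D W 0 \<ge> 0))"
proof -
  have Wnn: "\<And>u v. 0 \<le> W u v" using W_range by blast
  have fin: "finite (set_pmf D)"
  proof (rule finite_subset)
    show "set_pmf D \<subseteq> PiE UNIV (\<lambda>_. \<Sigma>)" using D_supp by auto
    show "finite (PiE (UNIV::'v set) (\<lambda>_. \<Sigma>))" by (rule finite_PiE) (use Sigma_fin in auto)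
  qed
  have cpos: "real CARD('v) > 0" by simp
  define C where "C \<theta> = Contrib D W \<theta> / Num D \<theta>" for \<theta>
  have Nnn: "Num D \<theta> \<ge> 0" for \<theta> unfolding Num_def by (rule integral_nonneg_AE) (auto intro!: sum_nonneg)
  have pers: "persuasive D W TYPE('i) \<longleftrightarrow> (\<forall>\<theta>. Num D \<theta> > 0 \<longrightarrow> \<theta> = max 0 (1 - C \<theta>))"
  proof -
    have "persuasive D W TYPE('i) \<longleftrightarrow> (\<forall>(i::'i) \<theta>. Num D \<theta> > 0 \<longrightarrow> \<theta> = max 0 (1 - C \<theta>))"
      unfolding persuasive_def
    proof (intro iff_allI imp_cong)
      fix i :: 'i and \<theta>
      show "(measure_pmf.prob (joint D :: (('i \<Rightarrow> 'v) \<times> ('v \<Rightarrow> real)) pmf) {(t, s). s (t i) = \<theta>} > 0) = (Num D \<theta> > 0)"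
        unfolding prob_eq[OF fin agents] using cpos by (simp add: zero_less_divide_iff)
      assume "Num D \<theta> > 0"
      then have pos: "measure_pmf.prob (joint D :: (('i \<Rightarrow> 'v) \<times> ('v \<Rightarrow> real)) pmf) {(t, s). s (t i) = \<theta>} > 0"
        unfolding prob_eq[OF fin agents] using cpos by simp
      show "(1 \<le> Qval D W i \<theta> \<theta> \<and> \<theta> = (LEAST x. 0 \<le> x \<and> 1 \<le> Qval D W i \<theta> x)) = (\<theta> = max 0 (1 - C \<theta>))"
        unfolding Qval_eq[OF fin agents Wnn pos] least_max C_def[symmetric] by auto
    qed
    then show ?thesis by simp
  qed
  have key: "(Num D \<theta> > 0 \<longrightarrow> \<theta> = max 0 (1 - C \<theta>)) \<longleftrightarrow>
      (\<theta> \<in> \<Sigma> \<longrightarrow> (\<theta> > 0 \<longrightarrow> Slack D W \<theta> = 0) \<and> (\<theta> = 0 \<longrightarrow> Slack D W \<theta> \<ge> 0))" for \<theta>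
  proof (cases "Num D \<theta> > 0")
    case True
    then have "\<theta> \<in> \<Sigma>" using num_zero[OF fin, of \<theta>] D_supp by force
    then have t0: "\<theta> \<ge> 0" using Sigma_sub by auto
    have e1: "\<theta> = 1 - C \<theta> \<longleftrightarrow> Slack D W \<theta> = 0"
      using aux1[OF True] unfolding C_def Slack_def by blast
    have e2: "0 \<ge> 1 - C \<theta> \<longleftrightarrow> Slack D W \<theta> \<ge> 0" if "\<theta> = 0"
      using aux2[OF True] that unfolding C_def Slack_def by simp
    have "(Num D \<theta> > 0 \<longrightarrow> \<theta> = max 0 (1 - C \<theta>)) \<longleftrightarrow> ((\<theta> > 0 \<longrightarrow> \<theta> = 1 - C \<theta>) \<and> (\<theta> = 0 \<longrightarrow> 1 - C \<theta> \<le> 0))"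
      using True aux3[OF t0] by blast
    also have "\<dots> \<longleftrightarrow> ((\<theta> > 0 \<longrightarrow> Slack D W \<theta> = 0) \<and> (\<theta> = 0 \<longrightarrow> Slack D W \<theta> \<ge> 0))"
      using e1 e2 by blast
    finally show ?thesis using \<open>\<theta> \<in> \<Sigma>\<close> by blast
  next
    case False
    then have "Num D \<theta> = 0" using Nnn[of \<theta>] by simp
    then have "Contrib D W \<theta> = 0" using num_zero[OF fin] contrib_zero[OF fin] by blast
    then have "Slack D W \<theta> = 0" using \<open>Num D \<theta> = 0\<close> by (simp add: Slack_def)
    then have "(\<theta> > 0 \<longrightarrow> Slack D W \<theta> = 0) \<and> (\<theta> = 0 \<longrightarrow> Slack D W \<theta> \<ge> 0)"
      by (intro conjI impI) simp_all
    then show ?thesis using False by blast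
  qed
  show ?thesis
  proof
    assume "persuasive D W TYPE('i)"
    then have A: "\<forall>\<theta>. Num D \<theta> > 0 \<longrightarrow> \<theta> = max 0 (1 - C \<theta>)" using pers by blast
    have B: "\<theta> \<in> \<Sigma> \<Longrightarrow> (\<theta> > 0 \<longrightarrow> Slack D W \<theta> = 0) \<and> (\<theta> = 0 \<longrightarrow> Slack D W \<theta> \<ge> 0)" for \<theta>
      using key[of \<theta>] A by blast
    show "(\<forall>\<theta>\<in>\<Sigma>. \<theta> > 0 \<longrightarrow> Slack D W \<theta> = 0) \<and> (0 \<in> \<Sigma> \<longrightarrow> Slack D W 0 \<ge> 0)"
      using B[of 0] B by blast
  next
    assume R: "(\<forall>\<theta>\<in>\<Sigma>. \<theta> > 0 \<longrightarrow> Slack D W \<theta> = 0) \<and> (0 \<in> \<Sigma> \<longrightarrow> Slack D W 0 \<ge> 0)"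
    have "Num D \<theta> > 0 \<longrightarrow> \<theta> = max 0 (1 - C \<theta>)" for \<theta>
    proof -
      have "\<theta> \<in> \<Sigma> \<longrightarrow> (\<theta> > 0 \<longrightarrow> Slack D W \<theta> = 0) \<and> (\<theta> = 0 \<longrightarrow> Slack D W \<theta> \<ge> 0)"
      proof (intro impI conjI)
        assume "\<theta> \<in> \<Sigma>" "\<theta> > 0" then show "Slack D W \<theta> = 0" using R by blast
      next
        assume "\<theta> \<in> \<Sigma>" "\<theta> = 0" then show "Slack D W \<theta> \<ge> 0" using R by blast
      qed
      then show ?thesis using key[of \<theta>] by blast
    qed
    then show "persuasive D W TYPE('i)" using pers by blast
  qed
qed

end
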